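(* Let $\mathcal{P}=\{x\in\mathbb{R}^n:\tfrac12(\max_i x_i-\min_i x_i)\le1\}$. Let $x\in\mathcal{P}$, let $\bar F$ be a (closed) face of $\mathcal{P}$, and let $B$ be a stochastic $n\times n$ matrix with all diagonal entries positive. Then $Bx\in\bar F$ implies $x\in\bar F$. Furthermore, for any stochastic $n\times n$ matrices $A$ and $C$, $ABCx\in\bar F$ implies $ACx\in\bar F$.
   Context: A stochastic matrix is a nonnegative matrix whose rows sum to $1$. A face of a polyhedron $\mathcal{Q}$ is a non-empty subset $F$ with $F=\mathcal{Q}$ or $F=\mathcal{Q}\cap\{x:b^\top x=c\}$ where $b^\top x\le c$ for all $x\in\mathcal{Q}$. *)

theory Defs
  imports "HOL-Analysis.Analysis"
begin

definition stochastic :: "real^'n^'n \<Rightarrow> bool" where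
  "stochastic A \<longleftrightarrow> (\<forall>i j. 0 \<le> A $ i $ j) \<and> (\<forall>i. (\<Sum>j\<in>UNIV. A $ i $ j) = 1)"

definition Pset :: "(real^'n) set" where
  "Pset = {x. (Max (range (\<lambda>i. x $ i)) - Min (range (\<lambda>i. x $ i))) / 2 \<le> 1}"

definition poly_face :: "(real^'n) set \<Rightarrow> (real^'n) set \<Rightarrow> bool" where
  "poly_face Q F \<longleftrightarrow> F \<noteq> {} \<and>
     (F = Q \<or> (\<exists>b c. (\<forall>x\<in>Q. b \<bullet> x \<le> c) \<and> F = Q \<inter> {x. b \<bullet> x = c}))"

end

theory Submission
  imports Defs
begin

lemma stoch_le_max:
  fixes M :: "real^'n^'n" and u :: "real^'n"
  assumes "stochastic M"
  shows "(M *v u) $ i \<le> Max (range (\<lambda>j. u $ j))"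
proof -
  let ?m = "Max (range (\<lambda>j. u $ j))"
  have "(M *v u) $ i = (\<Sum>j\<in>UNIV. M $ i $ j * u $ j)" by (simp add: matrix_vector_mult_def)
  also have "\<dots> \<le> (\<Sum>j\<in>UNIV. M $ i $ j * ?m)"
    apply (rule sum_mono) apply (rule mult_left_mono)
    using assms by (auto simp: stochastic_def)
  also have "\<dots> = ?m" using assms by (simp add: stochastic_def flip: sum_distrib_right)
  finally show ?thesis .
qed

lemma stoch_ge_min:
  fixes M :: "real^'n^'n" and u :: "real^'n"
  assumes "stochastic M"
  shows "Min (range (\<lambda>j. u $ j)) \<le> (M *v u) $ i"
proof -
  let ?m = "Min (range (\<lambda>j. u $ j))"
  have "?m = (\<Sum>j\<in>UNIV. M $ i $ j * ?m)" using assms by (simp add: stochastic_def flip: sum_distrib_right)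
  also have "\<dots> \<le> (\<Sum>j\<in>UNIV. M $ i $ j * u $ j)"
    apply (rule sum_mono) apply (rule mult_left_mono)
    using assms by (auto simp: stochastic_def)
  also have "\<dots> = (M *v u) $ i" by (simp add: matrix_vector_mult_def)
  finally show ?thesis .
qed

lemma stoch_P:
  fixes M :: "real^'n^'n" and u :: "real^'n"
  assumes "stochastic M" "u \<in> Pset"
  shows "M *v u \<in> Pset"
proof -
  have a: "Max (range (\<lambda>i. (M *v u) $ i)) \<le> Max (range (\<lambda>j. u $ j))"
    using stoch_le_max[OF assms(1)] by (simp add: Max_le_iff)
  have b: "Min (range (\<lambda>j. u $ j)) \<le> Min (range (\<lambda>i. (M *v u) $ i))"
    using stoch_ge_min[OF assms(1)] by (simp add: Min_ge_iff)
  have c: "(Max (range (\<lambda>j. u $ j)) - Min (range (\<lambda>j. u $ j))) / 2 \<le> 1"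
    using assms(2) by (simp add: Pset_def)
  show ?thesis unfolding Pset_def mem_Collect_eq using a b c by (smt (verit) divide_right_mono)
qed

lemma face_extreme:
  fixes u v :: "real^'n"
  assumes "poly_face Pset F" "u \<in> Pset" "v \<in> Pset" "0 < t" "t < 1"
    "t *\<^sub>R u + (1 - t) *\<^sub>R v \<in> F"
  shows "u \<in> F"
  using assms(1) unfolding poly_face_def
proof (elim conjE disjE exE)
  assume "F = Pset" thus ?thesis using assms by simp
next
  fix b c assume h: "\<forall>x\<in>Pset. b \<bullet> x \<le> c" and F: "F = Pset \<inter> {x. b \<bullet> x = c}"
  have e: "t * (b \<bullet> u) + (1 - t) * (b \<bullet> v) = c"
    using assms(6) F by (simp add: inner_add_right)
  have "b \<bullet> u \<le> c" "b \<bullet> v \<le> c" using h assms by auto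
  hence n1: "0 \<le> t * (c - b \<bullet> u)" "0 \<le> (1 - t) * (c - b \<bullet> v)" using assms(4,5) by auto
  have "t * (c - b \<bullet> u) + (1 - t) * (c - b \<bullet> v) = 0" using e by (simp add: algebra_simps)
  hence "t * (c - b \<bullet> u) = 0" using n1 by linarith
  hence "b \<bullet> u = c" using assms(4) by simp
  thus ?thesis using F assms(2) by simp
qed

lemma decomp:
  fixes B :: "real^'n^'n"
  assumes "stochastic B" "\<forall>i. 0 < B $ i $ i"
  obtains t B' where "0 < t" "t < 1" "stochastic B'"
    "\<And>z. B *v z = t *\<^sub>R z + (1 - t) *\<^sub>R (B' *v z)"
proof -
  define t where "t = Min (range (\<lambda>i. B $ i $ i)) / 2"
  have mn: "Min (range (\<lambda>i. B $ i $ i)) \<le> B $ i $ i" for i by simp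
  have pos: "0 < Min (range (\<lambda>i. B $ i $ i))" using assms(2) by (simp add: Min_gr_iff)
  have le1: "B $ i $ i \<le> 1" for i
  proof -
    have "B $ i $ i \<le> (\<Sum>j\<in>UNIV. B $ i $ j)"
      by (rule member_le_sum) (use assms(1) in \<open>auto simp: stochastic_def\<close>)
    thus ?thesis using assms(1) by (simp add: stochastic_def)
  qed
  have t0: "0 < t" using pos by (simp add: t_def)
  obtain i0 :: 'n where True by simp
  have t1: "t < 1" using mn[of i0] le1[of i0] pos unfolding t_def by linarith
  have tle: "t \<le> B $ i $ i" for i using mn[of i] pos unfolding t_def by linarith
  define B' where "B' = (1 / (1 - t)) *\<^sub>R (B - t *\<^sub>R mat 1)"
  have ent: "B' $ i $ j = (B $ i $ j - (if i = j then t else 0)) / (1 - t)" for i j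
    by (simp add: B'_def mat_def)
  have "stochastic B'"
    unfolding stochastic_def
  proof (intro conjI allI)
    fix i j show "0 \<le> B' $ i $ j" unfolding ent using t1 tle[of i] assms(1)
      by (auto simp: stochastic_def)
  next
    fix i
    have "(\<Sum>j\<in>UNIV. B' $ i $ j) = ((\<Sum>j\<in>UNIV. B $ i $ j) - (\<Sum>j\<in>UNIV. (if i = j then t else 0))) / (1 - t)"
      unfolding ent sum_divide_distrib[symmetric] by (simp add: sum_subtractf)
    also have "\<dots> = 1" using assms(1) t1 by (simp add: stochastic_def)
    finally show "(\<Sum>j\<in>UNIV. B' $ i $ j) = 1" .
  qed
  moreover have "B *v z = t *\<^sub>R z + (1 - t) *\<^sub>R (B' *v z)" for z
  proof -
    have "(1 - t) *\<^sub>R B' = B - t *\<^sub>R mat 1" using t1 by (simp add: B'_def)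
    hence "B = t *\<^sub>R mat 1 + (1 - t) *\<^sub>R B'" by simp
    hence "B *v z = (t *\<^sub>R mat 1 + (1 - t) *\<^sub>R B') *v z" by simp
    also have "\<dots> = t *\<^sub>R z + (1 - t) *\<^sub>R (B' *v z)"
      by (simp add: matrix_vector_mult_add_rdistrib flip: scaleR_matrix_vector_assoc)
    finally show ?thesis .
  qed
  ultimately show ?thesis using that t0 t1 by blast
qed

theorem lemma6:
  fixes x :: "real^'n" and F :: "(real^'n) set" and A B C :: "real^'n^'n"
  assumes "x \<in> Pset"
    and "poly_face Pset F"
    and "stochastic B"
    and "\<forall>i. 0 < B $ i $ i"
  shows "(B *v x \<in> F \<longrightarrow> x \<in> F) \<and>
         (stochastic A \<longrightarrow> stochastic C \<longrightarrow> (A ** B ** C) *v x \<in> F \<longrightarrow> (A ** C) *v x \<in> F)"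
proof -
  obtain t B' where t: "0 < t" "t < 1" and sB': "stochastic B'"
    and dec: "\<And>z. B *v z = t *\<^sub>R z + (1 - t) *\<^sub>R (B' *v z)"
    using decomp[OF assms(3,4)] by blast
  have p1: "B *v x \<in> F \<longrightarrow> x \<in> F"
    using face_extreme[OF assms(2) assms(1) stoch_P[OF sB' assms(1)] t] dec[of x] by simp
  have p2: "(A ** B ** C) *v x \<in> F \<longrightarrow> (A ** C) *v x \<in> F" if sA: "stochastic A" and sC: "stochastic C"
  proof
    assume h: "(A ** B ** C) *v x \<in> F"
    let ?z = "C *v x"
    have zP: "?z \<in> Pset" using stoch_P[OF sC assms(1)] .
    have "(A ** B ** C) *v x = A *v (B *v ?z)" by (simp add: matrix_vector_mul_assoc matrix_mul_assoc)
    also have "\<dots> = t *\<^sub>R (A *v ?z) + (1 - t) *\<^sub>R (A *v (B' *v ?z))"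
      by (simp add: dec matrix_vector_right_distrib matrix_vector_mult_scaleR)
    finally have "t *\<^sub>R (A *v ?z) + (1 - t) *\<^sub>R (A *v (B' *v ?z)) \<in> F" using h by simp
    from face_extreme[OF assms(2) stoch_P[OF sA zP] stoch_P[OF sA stoch_P[OF sB' zP]] t this]
    show "(A ** C) *v x \<in> F" by (simp add: matrix_vector_mul_assoc)
  qed
  show ?thesis using p1 p2 by blast
qed

end
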